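(* Fix the following data: - a power vector $\bm{p}\in\mathbb{R}^n_{>0}$ and a demand vector $\bm{d}\in\mathbb{R}^m_{>0}$; - an association $\kappa$ in which every UE is served by at least one cell and every cell serves at least one UE; - a UE $u$ and a cell $c\notin\mathcal{I}_u$. Let $\tilde{\bm{x}}\in\mathbb{R}^n_{\ge0}$ satisfy $\tilde{\bm{x}}=\bm{f}(\bm{h}(\tilde{\bm{x}}))$, and let $\bm{x}\in\mathbb{R}^n_{\ge0}$ satisfy $\bm{x}=\bm{f}^+(\bm{h}^+(\bm{x}))$. Define the iteration $\bm{x}^{(0)}=\tilde{\bm{x}}$ and $\bm{x}^{(k)}=\bm{f}(\bm{h}^+(\bm{x}^{(k-1)}))$ for $k\ge1$. If there exists $k\ge1$ with $f^+_c(\bm{h}^+(\bm{x}^{(k)}))\le x^{(k)}_c$, then $\bm{x}\le\tilde{\bm{x}}$, that is, $x_i\le\tilde{x}_i$ for all $i\in\mathcal{I}$ and $\bm{x}\ne\tilde{\bm{x}}$.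
   Context: Cellular network model. $\mathcal{I}$ is a set of $n$ cells and $\mathcal{J}$ a set of $m$ UEs. The association $\kappa\in\{0,1\}^{n\times m}$ gives $\mathcal{I}_j=\{i:\kappa_{ij}=1\}$ and $\mathcal{J}_i=\{j:\kappa_{ij}=1\}$. $M,B>0$ are constants, $\sigma^2>0$ is the noise power and $g_{ij}>0$ are the channel gains. With $\bm{p},\bm{d}$ fixed, define for $\bm{x}\in\mathbb{R}^n_{\ge0}$ and $\bm{\gamma}\in\mathbb{R}^m_{>0}$ the maps before adding the link: - $h_j(\bm{x})=\dfrac{\sum_{i\in\mathcal{I}_j}p_ig_{ij}}{\sum_{k\in\mathcal{I}\setminus\mathcal{I}_j}p_kg_{kj}x_k+\sigma^2}$; - $f_i(\bm{\gamma})=\sum_{j\in\mathcal{J}_i}\dfrac{d_j}{MB\log_2(1+\gamma_j)}$. The maps after letting cell $c$ additionally serve UE $u$ are: - $h^+_u(\bm{x})=\dfrac{\sum_{i\in\mathcal{I}_u\cup\{c\}}p_ig_{iu}}{\sum_{k\in\mathcal{I}\setminus(\mathcal{I}_u\cup\{c\})}p_kg_{ku}x_k+\sigma^2}$, and $h^+_j=h_j$ for $j\ne u$; - $f^+_c(\bm{\gamma})=\sum_{j\in\mathcal{J}_c\cup\{u\}}\dfrac{d_j}{MB\log_2(1+\gamma_j)}$, and $f^+_i=f_i$ for $i\ne c$. Vectors are $\bm{h}=(h_j)_j$, $\bm{f}=(f_i)_i$, and similarly for $\bm{h}^+$ and $\bm{f}^+$. It is known, and assumed here, that $\bm{f}\circ\bm{h}$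 and $\bm{f}^+\circ\bm{h}^+$ are standard interference functions, each with a unique fixed point. The vector inequality $\bm{x}\le\tilde{\bm{x}}$ means componentwise $\le$ with strict inequality in at least one component. *)

theory Defs
  imports Complex_Main
begin

(* Cells are the elements of a finite type 'c (the set \<I> = UNIV),
   UEs are the elements of a finite type 'u (the set \<J> = UNIV).
   The association \<kappa> is a Boolean relation: \<kappa> i j \<longleftrightarrow> \<kappa>_ij = 1. *)

definition cells_of :: "('c \<Rightarrow> 'u \<Rightarrow> bool) \<Rightarrow> 'u \<Rightarrow> 'c set" where
  "cells_of \<kappa> j = {i. \<kappa> i j}"

definition ues_of :: "('c \<Rightarrow> 'u \<Rightarrow> bool) \<Rightarrow> 'c \<Rightarrow> 'u set" where
  "ues_of \<kappa> i = {j. \<kappa> i j}"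

definition hmap :: "('c::finite \<Rightarrow> 'u \<Rightarrow> bool) \<Rightarrow> ('c \<Rightarrow> real) \<Rightarrow> ('c \<Rightarrow> 'u \<Rightarrow> real)
                    \<Rightarrow> real \<Rightarrow> ('c \<Rightarrow> real) \<Rightarrow> 'u \<Rightarrow> real" where
  "hmap \<kappa> p g \<sigma>2 x j =
     (\<Sum>i\<in>cells_of \<kappa> j. p i * g i j) /
     ((\<Sum>k\<in>UNIV - cells_of \<kappa> j. p k * g k j * x k) + \<sigma>2)"

definition fmap :: "('c \<Rightarrow> 'u::finite \<Rightarrow> bool) \<Rightarrow> ('u \<Rightarrow> real) \<Rightarrow> real \<Rightarrow> real
                    \<Rightarrow> ('u \<Rightarrow> real) \<Rightarrow> 'c \<Rightarrow> real" where
  "fmap \<kappa> d M B \<gamma> i = (\<Sum>j\<in>ues_of \<kappa> i. d j / (M * B * log 2 (1 + \<gamma> j)))"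

(* association after letting cell c additionally serve UE u;
   then h^+ = hmap (add_link \<kappa> c u) ... and f^+ = fmap (add_link \<kappa> c u) ... *)
definition add_link :: "('c \<Rightarrow> 'u \<Rightarrow> bool) \<Rightarrow> 'c \<Rightarrow> 'u \<Rightarrow> ('c \<Rightarrow> 'u \<Rightarrow> bool)" where
  "add_link \<kappa> c u = (\<lambda>i j. \<kappa> i j \<or> (i = c \<and> j = u))"

end

theory Submission imports Defs "HOL-Analysis.Analysis" begin

lemma key_ln: fixes a g :: real assumes "a > 1" "g > 0"
  shows "ln (1+g) / a \<le> ln (1 + g/a)"
proof -
  have c: "\<forall>x\<in>{0<..}. \<forall>y\<in>{0<..}. \<forall>u\<ge>0. \<forall>v\<ge>0. u + v = 1 \<longrightarrow> u * ln x + v * ln y \<le> ln (u * x + v * (y::real))"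
    using ln_concave by (simp add: concave_on_iff)
  have e: "(1/a) * (1+g) + (1 - 1/a) * 1 = 1 + g/a" using assms by (simp add: field_simps)
  have "(1/a) * ln (1+g) + (1 - 1/a) * ln 1 \<le> ln ((1/a) * (1+g) + (1 - 1/a) * 1)"
    apply (rule c[rule_format]) using assms by auto
  hence "(1/a) * ln (1+g) + (1 - 1/a) * ln 1 \<le> ln (1 + g/a)" unfolding e .
  thus ?thesis by simp
qed

lemma key_log: fixes a g :: real assumes "a > 1" "g > 0"
  shows "log 2 (1+g) / a \<le> log 2 (1 + g/a)"
proof -
  have "ln (1+g) / a / ln 2 \<le> ln (1 + g/a) / ln 2"
    using key_ln[OF assms] by (intro divide_right_mono) auto
  thus ?thesis by (simp add: log_def mult.commute)
qed

lemma log_pos': "(a::real) > 0 \<Longrightarrow> log 2 (1+a) > 0" by simp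

lemma term_anti:
  fixes a b dj M B :: real
  assumes "0 < a" "a \<le> b" "dj > 0" "M > 0" "B > 0"
  shows "dj / (M*B*log 2 (1+b)) \<le> dj / (M*B*log 2 (1+a))"
proof -
  have "log 2 (1+a) \<le> log 2 (1+b)" using assms by simp
  moreover have "log 2 (1+a) > 0" using assms by simp
  ultimately show ?thesis using assms
    by (intro divide_left_mono) (auto intro!: mult_pos_pos mult_left_mono)
qed

lemma term_anti_strict:
  fixes a b dj M B :: real
  assumes "0 < a" "a < b" "dj > 0" "M > 0" "B > 0"
  shows "dj / (M*B*log 2 (1+b)) < dj / (M*B*log 2 (1+a))"
proof -
  have "log 2 (1+a) < log 2 (1+b)" using assms by simp
  moreover have "log 2 (1+a) > 0" using assms by simp
  ultimately show ?thesis using assms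
    by (intro divide_strict_left_mono) (auto intro!: mult_pos_pos mult_strict_left_mono)
qed

lemma hpos:
  fixes k :: "'c::finite \<Rightarrow> 'u \<Rightarrow> bool"
  assumes "\<forall>i j. g i j > 0" "\<forall>i. p i > 0" "\<sigma>2 > 0" "\<exists>i. k i j" "\<forall>i. x i \<ge> 0"
  shows "hmap k p g \<sigma>2 x j > 0"
proof -
  have "(\<Sum>i\<in>cells_of k j. p i * g i j) > 0"
    using assms by (intro sum_pos) (auto simp: cells_of_def)
  moreover have "(\<Sum>i\<in>UNIV - cells_of k j. p i * g i j * x i) \<ge> 0"
  proof (intro sum_nonneg)
    fix i show "0 \<le> p i * g i j * x i" using assms
      by (meson less_imp_le mult_nonneg_nonneg)
  qed
  ultimately show ?thesis using assms unfolding hmap_def by (auto intro!: divide_pos_pos)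
qed

lemma hanti:
  fixes k :: "'c::finite \<Rightarrow> 'u \<Rightarrow> bool"
  assumes "\<forall>i j. g i j > 0" "\<forall>i. p i > 0" "\<sigma>2 > 0" "\<exists>i. k i j" "\<forall>i. x i \<ge> 0"
    "\<forall>i. x i \<le> y i"
  shows "hmap k p g \<sigma>2 y j \<le> hmap k p g \<sigma>2 x j"
proof -
  have N: "(\<Sum>i\<in>cells_of k j. p i * g i j) > 0"
    using assms by (intro sum_pos) (auto simp: cells_of_def)
  have D: "(\<Sum>i\<in>UNIV - cells_of k j. p i * g i j * x i) \<ge> 0"
  proof (intro sum_nonneg)
    fix i show "0 \<le> p i * g i j * x i" using assms
      by (meson less_imp_le mult_nonneg_nonneg)
  qed
  have DD: "(\<Sum>i\<in>UNIV - cells_of k j. p i * g i j * x i) \<le> (\<Sum>i\<in>UNIV - cells_of k j. p i * g i j * y i)"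
    using assms by (intro sum_mono) (auto intro!: mult_left_mono less_imp_le)
  show ?thesis unfolding hmap_def
    using N D DD assms(3) by (intro divide_left_mono) (auto intro!: mult_pos_pos)
qed

lemma fanti:
  fixes k :: "'c \<Rightarrow> 'u::finite \<Rightarrow> bool"
  assumes "\<forall>j. \<gamma> j > 0" "\<forall>j. \<gamma> j \<le> \<gamma>' j" "\<forall>j. d j > 0" "M > 0" "B > 0"
  shows "fmap k d M B \<gamma>' i \<le> fmap k d M B \<gamma> i"
  unfolding fmap_def using assms by (intro sum_mono term_anti) auto

lemma fpos:
  fixes k :: "'c \<Rightarrow> 'u::finite \<Rightarrow> bool"
  assumes "\<forall>j. \<gamma> j > 0" "\<forall>j. d j > 0" "M > 0" "B > 0" "\<exists>j. k i j"
  shows "fmap k d M B \<gamma> i > 0"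
  unfolding fmap_def using assms
  by (intro sum_pos) (auto simp: ues_of_def intro!: divide_pos_pos mult_pos_pos log_pos')

lemma cells_add_other: "j \<noteq> u \<Longrightarrow> cells_of (add_link k c u) j = cells_of k j"
  by (auto simp: cells_of_def add_link_def)
lemma ues_add_other: "i \<noteq> c \<Longrightarrow> ues_of (add_link k c u) i = ues_of k i"
  by (auto simp: ues_of_def add_link_def)
lemma cells_add_u: "cells_of (add_link k c u) u = insert c (cells_of k u)"
  by (auto simp: cells_of_def add_link_def)

lemma h_plus_u:
  fixes k :: "'c::finite \<Rightarrow> 'u \<Rightarrow> bool"
  assumes "\<forall>i j. g i j > 0" "\<forall>i. p i > 0" "\<sigma>2 > 0" "\<exists>i. k i u" "\<forall>i. x i \<ge> 0"
    "c \<notin> cells_of k u"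
  shows "hmap k p g \<sigma>2 x u < hmap (add_link k c u) p g \<sigma>2 x u"
proof -
  define S where "S = cells_of k u"
  define N where "N = (\<Sum>i\<in>S. p i * g i u)"
  define e where "e = p c * g c u"
  define I where "I = (\<Sum>i\<in>UNIV - S. p i * g i u * x i)"
  define I' where "I' = (\<Sum>i\<in>UNIV - insert c S. p i * g i u * x i)"
  have N: "N > 0" unfolding N_def S_def
    using assms by (intro sum_pos) (auto simp: cells_of_def)
  have e: "e > 0" unfolding e_def using assms by simp
  have I': "I' \<ge> 0" unfolding I'_def
  proof (intro sum_nonneg)
    fix i show "0 \<le> p i * g i u * x i" using assms
      by (meson less_imp_le mult_nonneg_nonneg)
  qed
  have eqs: "UNIV - insert c S = (UNIV - S) - {c}" by blast
  have "I = p c * g c u * x c + I'" unfolding I_def I'_def eqs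
    using sum.remove[of "UNIV - S" c "\<lambda>i. p i * g i u * x i"] assms(6) S_def by auto
  hence II: "I' \<le> I" using e assms(5) e_def by simp
  have Np: "(\<Sum>i\<in>insert c S. p i * g i u) = e + N"
    unfolding N_def e_def using assms(6) S_def by (simp add: sum.insert)
  have "N / (I + \<sigma>2) \<le> N / (I' + \<sigma>2)"
    using N I' II assms(3) by (intro divide_left_mono) (auto intro!: mult_pos_pos)
  also have "\<dots> < (e + N) / (I' + \<sigma>2)"
    using e I' assms(3) by (intro divide_strict_right_mono) auto
  finally have fin: "N / (I + \<sigma>2) < (e + N) / (I' + \<sigma>2)" .
  have h1: "hmap k p g \<sigma>2 x u = N / (I + \<sigma>2)"
    unfolding hmap_def N_def I_def S_def by (rule refl)
  have h2: "hmap (add_link k c u) p g \<sigma>2 x u = (e + N) / (I' + \<sigma>2)"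
    unfolding hmap_def cells_add_u I'_def S_def[symmetric] Np by (rule refl)
  show ?thesis unfolding h1 h2 by (rule fin)
qed

lemma h_scal:
  fixes k :: "'c::finite \<Rightarrow> 'u \<Rightarrow> bool"
  assumes "\<forall>i j. g i j > 0" "\<forall>i. p i > 0" "\<sigma>2 > 0" "\<exists>i. k i j" "\<forall>i. y i \<ge> 0" "a > 1"
  shows "hmap k p g \<sigma>2 y j / a < hmap k p g \<sigma>2 (\<lambda>i. a * y i) j"
proof -
  define N where "N = (\<Sum>i\<in>cells_of k j. p i * g i j)"
  define I where "I = (\<Sum>i\<in>UNIV - cells_of k j. p i * g i j * y i)"
  have N: "N > 0" unfolding N_def
    using assms by (intro sum_pos) (auto simp: cells_of_def)
  have I: "I \<ge> 0" unfolding I_def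
  proof (intro sum_nonneg)
    fix i show "0 \<le> p i * g i j * y i" using assms
      by (meson less_imp_le mult_nonneg_nonneg)
  qed
  have Ia: "(\<Sum>i\<in>UNIV - cells_of k j. p i * g i j * (a * y i)) = a * I"
    unfolding I_def sum_distrib_left by (simp add: algebra_simps)
  have "N / (I + \<sigma>2) / a = N / (a * I + a * \<sigma>2)" using assms(6) by (simp add: field_simps)
  also have "\<dots> < N / (a * I + \<sigma>2)"
    using N I assms(3,6) by (intro divide_strict_left_mono) (auto intro!: add_nonneg_pos mult_pos_pos)
  finally have fin: "N / (I + \<sigma>2) / a < N / (a * I + \<sigma>2)" .
  have h1: "hmap k p g \<sigma>2 y j = N / (I + \<sigma>2)"
    unfolding hmap_def N_def I_def by (rule refl)
  have h2: "hmap k p g \<sigma>2 (\<lambda>i. a * y i) j = N / (a * I + \<sigma>2)"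
    unfolding hmap_def Ia N_def by (rule refl)
  show ?thesis unfolding h1 h2 by (rule fin)
qed

lemma f_scal:
  fixes k :: "'c::finite \<Rightarrow> 'u::finite \<Rightarrow> bool"
  assumes "\<forall>i j. g i j > 0" "\<forall>i. p i > 0" "\<sigma>2 > 0" "\<forall>j. \<exists>i. k i j" "\<forall>i. y i \<ge> 0" "a > 1"
    "\<forall>j. d j > 0" "M > 0" "B > 0" "\<exists>j. k i j"
  shows "fmap k d M B (hmap k p g \<sigma>2 (\<lambda>i. a * y i)) i < a * fmap k d M B (hmap k p g \<sigma>2 y) i"
  unfolding fmap_def sum_distrib_left
proof (rule sum_strict_mono)
  show "ues_of k i \<noteq> {}" using assms(10) by (auto simp: ues_of_def)
next
  fix j assume "j \<in> ues_of k i"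
  define \<gamma> where "\<gamma> = hmap k p g \<sigma>2 y j"
  define \<gamma>' where "\<gamma>' = hmap k p g \<sigma>2 (\<lambda>i. a * y i) j"
  have gp: "\<gamma> > 0" unfolding \<gamma>_def using hpos[OF assms(1,2,3) _ assms(5)] assms(4) by blast
  have lt: "\<gamma> / a < \<gamma>'" unfolding \<gamma>_def \<gamma>'_def using h_scal[OF assms(1,2,3) _ assms(5,6)] assms(4) by blast
  have L: "log 2 (1+\<gamma>) > 0" using gp by simp
  have "d j / (M*B*log 2 (1+\<gamma>')) < d j / (M*B*log 2 (1+\<gamma>/a))"
    using gp lt assms(6,7,8,9) by (intro term_anti_strict) auto
  also have "\<dots> \<le> d j / (M*B*(log 2 (1+\<gamma>) / a))"
  proof (rule divide_left_mono)
    show "M * B * (log 2 (1 + \<gamma>) / a) \<le> M * B * log 2 (1 + \<gamma> / a)"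
      by (rule mult_left_mono[OF key_log[OF assms(6) gp]]) (use assms(8,9) in simp)
    show "0 \<le> d j" using assms(7) less_imp_le by blast
    show "0 < M * B * log 2 (1 + \<gamma> / a) * (M * B * (log 2 (1 + \<gamma>) / a))"
    proof -
      have "\<gamma> / a > 0" using gp assms(6) by simp
      hence "log 2 (1 + \<gamma> / a) > 0" by simp
      thus ?thesis using assms(6,8,9) L by (intro mult_pos_pos divide_pos_pos) auto
    qed
  qed
  also have "\<dots> = a * (d j / (M*B*log 2 (1+\<gamma>)))" using assms(6) by (simp add: field_simps)
  finally show "d j / (M*B*log 2 (1+\<gamma>')) < a * (d j / (M*B*log 2 (1+\<gamma>)))" .
qed auto


theorem theorem2:
  fixes \<kappa> :: "'c::finite \<Rightarrow> 'u::finite \<Rightarrow> bool"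
    and p :: "'c \<Rightarrow> real" and d :: "'u \<Rightarrow> real" and g :: "'c \<Rightarrow> 'u \<Rightarrow> real"
    and M B \<sigma>2 :: real and u :: 'u and c :: 'c
    and x xt :: "'c \<Rightarrow> real"
  assumes M: "M > 0" and B: "B > 0" and \<sigma>: "\<sigma>2 > 0"
    and g_pos: "\<forall>i j. g i j > 0"
    and p_pos: "\<forall>i. p i > 0" and d_pos: "\<forall>j. d j > 0"
    and ue_served: "\<forall>j. \<exists>i. \<kappa> i j"
    and cell_serves: "\<forall>i. \<exists>j. \<kappa> i j"
    and c_notin: "c \<notin> cells_of \<kappa> u"
    and xt_nonneg: "\<forall>i. xt i \<ge> 0"
    and xt_fix: "xt = fmap \<kappa> d M B (hmap \<kappa> p g \<sigma>2 xt)"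
    and x_nonneg: "\<forall>i. x i \<ge> 0"
    and x_fix: "x = fmap (add_link \<kappa> c u) d M B (hmap (add_link \<kappa> c u) p g \<sigma>2 x)"
    and cond: "\<exists>k\<ge>1.
       fmap (add_link \<kappa> c u) d M B
         (hmap (add_link \<kappa> c u) p g \<sigma>2
            (((\<lambda>y. fmap \<kappa> d M B (hmap (add_link \<kappa> c u) p g \<sigma>2 y)) ^^ k) xt)) c
       \<le> (((\<lambda>y. fmap \<kappa> d M B (hmap (add_link \<kappa> c u) p g \<sigma>2 y)) ^^ k) xt) c"
  shows "(\<forall>i. x i \<le> xt i) \<and> x \<noteq> xt"
proof -
  define K where "K = add_link \<kappa> c u"
  define G where "G = (\<lambda>y. fmap \<kappa> d M B (hmap K p g \<sigma>2 y))"
  define X where "X = (\<lambda>k. (G ^^ k) xt)"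
  define Fp where "Fp = (\<lambda>y. fmap K d M B (hmap K p g \<sigma>2 y))"
  have servedK: "\<forall>j. \<exists>i. K i j" using ue_served by (auto simp: K_def add_link_def)
  have servesK: "\<forall>i. \<exists>j. K i j" using cell_serves by (auto simp: K_def add_link_def)
  have hK_pos: "hmap K p g \<sigma>2 y j > 0" if "\<forall>i. 0 \<le> y i" for y j
    by (rule hpos[OF g_pos p_pos \<sigma>]) (use servedK that in auto)
  have hK_anti: "hmap K p g \<sigma>2 y' j \<le> hmap K p g \<sigma>2 y j"
    if "\<forall>i. 0 \<le> y i" "\<forall>i. y i \<le> y' i" for y y' j
    by (rule hanti[OF g_pos p_pos \<sigma>]) (use servedK that in auto)
  have Gmono: "G y i \<le> G y' i" if a: "\<forall>i. 0 \<le> y i" "\<forall>i. y i \<le> y' i" for y y' i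
  proof -
    have "\<forall>i. 0 \<le> y' i" using a by (metis order.trans)
    hence p1: "\<forall>j. hmap K p g \<sigma>2 y' j > 0" using hK_pos by blast
    have p2: "\<forall>j. hmap K p g \<sigma>2 y' j \<le> hmap K p g \<sigma>2 y j"
      using hK_anti[OF a] by blast
    show "G y i \<le> G y' i" unfolding G_def by (rule fanti[OF p1 p2 d_pos M B])
  qed
  have Fpmono: "Fp y i \<le> Fp y' i" if a: "\<forall>i. 0 \<le> y i" "\<forall>i. y i \<le> y' i" for y y' i
  proof -
    have "\<forall>i. 0 \<le> y' i" using a by (metis order.trans)
    hence p1: "\<forall>j. hmap K p g \<sigma>2 y' j > 0" using hK_pos by blast
    have p2: "\<forall>j. hmap K p g \<sigma>2 y' j \<le> hmap K p g \<sigma>2 y j"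
      using hK_anti[OF a] by blast
    show "Fp y i \<le> Fp y' i" unfolding Fp_def by (rule fanti[OF p1 p2 d_pos M B])
  qed
  have Gpos: "G y i > 0" if "\<forall>i. 0 \<le> y i" for y i
  proof -
    have "\<forall>j. hmap K p g \<sigma>2 y j > 0" using hK_pos[OF that] by blast
    thus ?thesis unfolding G_def by (rule fpos[OF _ d_pos M B]) (use cell_serves in blast)
  qed
  have XS: "\<And>k. X (Suc k) = G (X k)" by (simp add: X_def)
  have Xnn: "\<forall>i. 0 \<le> X k i" for k
  proof (induction k)
    case 0 then show ?case using xt_nonneg by (simp add: X_def)
  next
    case (Suc k) then show ?case unfolding XS using Gpos less_imp_le by blast
  qed
  have hle: "hmap \<kappa> p g \<sigma>2 xt j \<le> hmap K p g \<sigma>2 xt j" for j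
  proof (cases "j = u")
    case True
    have "hmap \<kappa> p g \<sigma>2 xt u < hmap K p g \<sigma>2 xt u" unfolding K_def
      by (rule h_plus_u[OF g_pos p_pos \<sigma> _ xt_nonneg c_notin]) (use ue_served in blast)
    then show ?thesis using True by simp
  next
    case False then show ?thesis unfolding K_def hmap_def by (simp add: cells_add_other)
  qed
  have hxpos: "\<forall>j. hmap \<kappa> p g \<sigma>2 xt j > 0"
  proof
    fix j show "hmap \<kappa> p g \<sigma>2 xt j > 0"
      by (rule hpos[OF g_pos p_pos \<sigma> _ xt_nonneg]) (use ue_served in blast)
  qed
  have xti: "fmap \<kappa> d M B (hmap \<kappa> p g \<sigma>2 xt) i = xt i" for i
    by (rule fun_cong[OF xt_fix, symmetric])
  have X1le: "X 1 i \<le> xt i" for i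
  proof -
    have "G xt i \<le> fmap \<kappa> d M B (hmap \<kappa> p g \<sigma>2 xt) i"
      unfolding G_def by (rule fanti[OF hxpos _ d_pos M B]) (use hle in blast)
    thus "X 1 i \<le> xt i" by (simp add: X_def xti)
  qed
  have Xdec: "\<And>i. X (Suc k) i \<le> X k i" for k
  proof (induction k)
    case 0 then show ?case using X1le by (simp add: X_def)
  next
    case (Suc k)
    have "G (X (Suc k)) i \<le> G (X k) i" by (rule Gmono[OF Xnn]) (use Suc.IH in blast)
    thus ?case by (simp only: XS)
  qed
  have XleX1: "\<And>i. X (Suc n) i \<le> X 1 i" for n
  proof (induction n)
    case 0 then show ?case by simp
  next
    case (Suc n)
    have "X (Suc (Suc n)) i \<le> X (Suc n) i" by (rule Xdec)
    also have "\<dots> \<le> X 1 i" by (rule Suc.IH)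
    finally show ?case .
  qed
  obtain i0 where i0: "\<kappa> i0 u" using ue_served by blast
  have X1lt: "X 1 i0 < xt i0"
  proof -
    have "G xt i0 < fmap \<kappa> d M B (hmap \<kappa> p g \<sigma>2 xt) i0"
      unfolding G_def fmap_def
    proof (rule sum_strict_mono_ex1)
      show "\<forall>j\<in>ues_of \<kappa> i0. d j / (M * B * log 2 (1 + hmap K p g \<sigma>2 xt j))
             \<le> d j / (M * B * log 2 (1 + hmap \<kappa> p g \<sigma>2 xt j))"
      proof
        fix j show "d j / (M * B * log 2 (1 + hmap K p g \<sigma>2 xt j))
             \<le> d j / (M * B * log 2 (1 + hmap \<kappa> p g \<sigma>2 xt j))"
          by (rule term_anti[OF _ hle _ M B]) (use hxpos d_pos in blast)+
      qed
      have "hmap \<kappa> p g \<sigma>2 xt u < hmap K p g \<sigma>2 xt u" unfolding K_def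
        by (rule h_plus_u[OF g_pos p_pos \<sigma> _ xt_nonneg c_notin]) (use ue_served in blast)
      hence "d u / (M * B * log 2 (1 + hmap K p g \<sigma>2 xt u))
             < d u / (M * B * log 2 (1 + hmap \<kappa> p g \<sigma>2 xt u))"
        by (rule term_anti_strict[OF _ _ _ M B, rotated]) (use hxpos d_pos in blast)+
      moreover have "u \<in> ues_of \<kappa> i0" using i0 by (simp add: ues_of_def)
      ultimately show "\<exists>j\<in>ues_of \<kappa> i0. d j / (M * B * log 2 (1 + hmap K p g \<sigma>2 xt j))
             < d j / (M * B * log 2 (1 + hmap \<kappa> p g \<sigma>2 xt j))"
        by blast
    qed simp
    thus ?thesis by (simp add: X_def xti)
  qed
  obtain k where k: "k \<ge> 1" "Fp (X k) c \<le> X k c"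
    using cond unfolding Fp_def X_def G_def K_def by blast
  then obtain k' where k': "k = Suc k'" by (cases k) auto
  define y where "y = X k"
  have ypos: "\<forall>i. y i > 0" unfolding y_def k' XS using Gpos Xnn by blast
  have ynn: "\<forall>i. 0 \<le> y i" using ypos less_imp_le by blast
  have Fpy: "Fp y i \<le> y i" for i
  proof (cases "i = c")
    case True then show ?thesis using k y_def by simp
  next
    case False
    have "Fp y i = G y i" unfolding Fp_def G_def fmap_def K_def using False
      by (simp add: ues_add_other)
    also have "\<dots> = X (Suc k) i" by (simp add: XS y_def)
    also have "\<dots> \<le> y i" unfolding y_def by (rule Xdec)
    finally show ?thesis .
  qed
  have xfix: "x i = Fp x i" for i unfolding Fp_def K_def by (rule fun_cong[OF x_fix])
  have xley: "\<forall>i. x i \<le> y i"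
  proof -
    define a where "a = Max (range (\<lambda>i. x i / y i))"
    have amax: "x i / y i \<le> a" for i unfolding a_def by (intro Max_ge) auto
    have xle: "x i \<le> a * y i" for i
    proof -
      have "x i / y i \<le> a" by (rule amax)
      thus ?thesis using ypos by (simp add: pos_divide_le_eq mult.commute)
    qed
    show ?thesis
    proof (cases "a \<le> 1")
      case True
      show ?thesis
      proof
        fix i
        have "a * y i \<le> 1 * y i" using True ypos by (intro mult_right_mono) (auto simp: less_imp_le)
        thus "x i \<le> y i" using xle[of i] by simp
      qed
    next
      case False
      hence a1: "a > 1" by simp
      have "a \<in> range (\<lambda>i. x i / y i)" unfolding a_def by (rule Max_in) auto
      then obtain i where ia: "x i / y i = a" by blast
      have yi: "y i > 0" using ypos by blast
      have xa: "x i = a * y i" using ia yi by (simp add: divide_eq_eq)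
      have "x i = Fp x i" by (rule xfix)
      also have "\<dots> \<le> Fp (\<lambda>i. a * y i) i" by (rule Fpmono) (use x_nonneg xle in auto)
      also have "\<dots> < a * Fp y i" unfolding Fp_def
        by (rule f_scal[OF g_pos p_pos \<sigma> servedK ynn a1 d_pos M B]) (use servesK in blast)
      also have "\<dots> \<le> a * y i" using Fpy[of i] a1 by simp
      finally show ?thesis using xa by simp
    qed
  qed
  have yle1: "\<forall>i. y i \<le> X 1 i" unfolding y_def k' using XleX1 by blast
  show ?thesis
  proof
    show "\<forall>i. x i \<le> xt i"
    proof
      fix i
      have "x i \<le> y i" using xley by blast
      also have "\<dots> \<le> X 1 i" using yle1 by blast
      also have "\<dots> \<le> xt i" by (rule X1le)
      finally show "x i \<le> xt i" .
    qed
    have "x i0 \<le> y i0" using xley by blast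
    also have "\<dots> \<le> X 1 i0" using yle1 by blast
    also have "\<dots> < xt i0" by (rule X1lt)
    finally have "x i0 < xt i0" .
    thus "x \<noteq> xt" by auto
  qed
qed

end
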